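(* Let $P\in\mathbb{C}[z_1,\dots,z_d]$ be a polynomial of total degree $k\ge1$. Then \[ \lim_{s\to\infty}\sqrt[s]{\|P^s\|_a}=\infty . \]
   Context: For multi-indices $\alpha\in\mathbb{N}^d$ write $z^\alpha=z_1^{\alpha_1}\cdots z_d^{\alpha_d}$ and $\alpha!=\alpha_1!\cdots\alpha_d!$. The apolar inner product on $\mathbb{C}[z_1,\dots,z_d]$ is $\langle \sum c_\alpha z^\alpha,\sum d_\alpha z^\alpha\rangle_a=\sum_\alpha\alpha!\,c_\alpha\overline{d_\alpha}$, with norm $\|P\|_a=\sqrt{\langle P,P\rangle_a}$. The total degree is the largest $|\alpha|=\alpha_1+\cdots+\alpha_d$ with nonzero coefficient. *)

theory Defs
  imports "HOL-Analysis.Analysis" "HOL-Library.Poly_Mapping"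
begin

text \<open>A polynomial in the variables z_i (i ranging over the finite type 'd, i.e. d variables)
  with complex coefficients is a finitely supported map from multi-indices
  (finitely supported maps 'd to nat) to complex numbers; multiplication is
  the convolution product provided by Poly_Mapping.\<close>

type_synonym 'd cpoly = "('d \<Rightarrow>\<^sub>0 nat) \<Rightarrow>\<^sub>0 complex"

definition mi_abs :: "('d \<Rightarrow>\<^sub>0 nat) \<Rightarrow> nat" where
  "mi_abs \<alpha> = (\<Sum>i\<in>Poly_Mapping.keys \<alpha>. Poly_Mapping.lookup \<alpha> i)"

definition mi_fact :: "('d \<Rightarrow>\<^sub>0 nat) \<Rightarrow> nat" where
  "mi_fact \<alpha> = (\<Prod>i\<in>Poly_Mapping.keys \<alpha>. fact (Poly_Mapping.lookup \<alpha> i))"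

definition total_degree :: "'d cpoly \<Rightarrow> nat" where
  "total_degree P = Max (insert 0 (mi_abs ` Poly_Mapping.keys P))"

definition apolar_inner :: "'d cpoly \<Rightarrow> 'd cpoly \<Rightarrow> complex" where
  "apolar_inner P Q = (\<Sum>\<alpha>\<in>Poly_Mapping.keys P \<union> Poly_Mapping.keys Q.
      of_nat (mi_fact \<alpha>) * Poly_Mapping.lookup P \<alpha> * cnj (Poly_Mapping.lookup Q \<alpha>))"

definition apolar_norm :: "'d cpoly \<Rightarrow> real" where
  "apolar_norm P = sqrt (Re (apolar_inner P P))"

end

theory Submission
  imports Defs
begin

lemma lookup_times_fin:
  fixes p q :: "('a::monoid_add) \<Rightarrow>\<^sub>0 ('b::semiring_0)"
  shows "Poly_Mapping.lookup (p*q) k = (\<Sum>a\<in>Poly_Mapping.keys p. Poly_Mapping.lookup p a * (\<Sum>b\<in>Poly_Mapping.keys q. (Poly_Mapping.lookup q b when k = a + b)))"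
proof -
  have "Poly_Mapping.lookup (p*q) k = (\<Sum>a. Poly_Mapping.lookup p a * (\<Sum>b. (Poly_Mapping.lookup q b when k = a + b)))"
    by (simp add: times_poly_mapping.rep_eq prod_fun_def)
  also have "(\<lambda>a. (\<Sum>b. (Poly_Mapping.lookup q b when k = a + b))) = (\<lambda>a. \<Sum>b\<in>Poly_Mapping.keys q. (Poly_Mapping.lookup q b when k = a + b))"
    by (intro ext Sum_any.expand_superset) (auto simp: in_keys_iff)
  also have "(\<Sum>a. Poly_Mapping.lookup p a * (\<Sum>b\<in>Poly_Mapping.keys q. (Poly_Mapping.lookup q b when k = a + b))) = (\<Sum>a\<in>Poly_Mapping.keys p. Poly_Mapping.lookup p a * (\<Sum>b\<in>Poly_Mapping.keys q. (Poly_Mapping.lookup q b when k = a + b)))"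
    by (intro Sum_any.expand_superset) (auto simp: in_keys_iff)
  finally show ?thesis .
qed



lemma power_lead:
  fixes P :: "('a \<Rightarrow>\<^sub>0 nat) \<Rightarrow>\<^sub>0 complex" and \<phi> :: "('a \<Rightarrow>\<^sub>0 nat) \<Rightarrow> nat"
  assumes add: "\<And>x y. \<phi> (x+y) = \<phi> x + \<phi> y"
    and a0: "\<alpha>0 \<in> Poly_Mapping.keys P"
    and le: "\<And>\<beta>. \<beta> \<in> Poly_Mapping.keys P \<Longrightarrow> \<phi> \<beta> \<le> \<phi> \<alpha>0"
    and uniq: "\<And>\<beta>. \<beta> \<in> Poly_Mapping.keys P \<Longrightarrow> \<phi> \<beta> = \<phi> \<alpha>0 \<Longrightarrow> \<beta> = \<alpha>0"
  shows "(\<forall>\<beta>\<in>Poly_Mapping.keys (P^s). \<phi> \<beta> \<le> s * \<phi> \<alpha>0) \<and>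
         Poly_Mapping.lookup (P^s) (\<Sum>j<s. \<alpha>0) = (Poly_Mapping.lookup P \<alpha>0)^s"
proof (induction s)
  case 0
  have "\<phi> 0 = 0" using add[of 0 0] by simp
  then show ?case by (simp add: keys_one)
next
  case (Suc s)
  let ?Q = "P^s"
  let ?m = "(\<Sum>j<s. \<alpha>0)"
  have IH1: "\<And>b. b \<in> Poly_Mapping.keys ?Q \<Longrightarrow> \<phi> b \<le> s * \<phi> \<alpha>0" using Suc.IH by blast
  have k: "\<forall>\<beta>\<in>Poly_Mapping.keys (P * ?Q). \<phi> \<beta> \<le> Suc s * \<phi> \<alpha>0"
  proof
    fix \<beta> assume "\<beta> \<in> Poly_Mapping.keys (P * ?Q)"
    then obtain a b where "a \<in> Poly_Mapping.keys P" "b \<in> Poly_Mapping.keys ?Q" "\<beta> = a + b"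
      using keys_mult by blast
    then show "\<phi> \<beta> \<le> Suc s * \<phi> \<alpha>0" using le IH1 add by fastforce
  qed
  have inner: "(\<Sum>b\<in>Poly_Mapping.keys ?Q. (Poly_Mapping.lookup ?Q b when \<alpha>0 + ?m = a + b))
      = (if a = \<alpha>0 then Poly_Mapping.lookup ?Q ?m else 0)" if aP: "a \<in> Poly_Mapping.keys P" for a
  proof (cases "a = \<alpha>0")
    case True
    have "(\<Sum>b\<in>Poly_Mapping.keys ?Q. (Poly_Mapping.lookup ?Q b when \<alpha>0 + ?m = a + b))
       = (\<Sum>b\<in>Poly_Mapping.keys ?Q. (if b = ?m then Poly_Mapping.lookup ?Q b else 0))"
      using True by (intro sum.cong) (auto simp: when_def)
    also have "\<dots> = Poly_Mapping.lookup ?Q ?m"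
      by (simp add: in_keys_iff)
    finally show ?thesis using True by simp
  next
    case False
    have "(Poly_Mapping.lookup ?Q b when \<alpha>0 + ?m = a + b) = 0" if bQ: "b \<in> Poly_Mapping.keys ?Q" for b
    proof (rule ccontr)
      assume "(Poly_Mapping.lookup ?Q b when \<alpha>0 + ?m = a + b) \<noteq> 0"
      then have e: "\<alpha>0 + ?m = a + b" by (auto simp: when_def split: if_splits)
      have "\<phi> ?m = s * \<phi> \<alpha>0"
        by (induction s) (simp_all add: add add[of 0 0, simplified])
      then have "\<phi> a + \<phi> b = \<phi> \<alpha>0 + s * \<phi> \<alpha>0" using e add by metis
      then have "\<phi> a = \<phi> \<alpha>0" using le[OF aP] IH1[OF bQ] by linarith
      then show False using uniq[OF aP] False by blast
    qed
    then show ?thesis using False by simp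
  qed
  have "Poly_Mapping.lookup (P * ?Q) (\<alpha>0 + ?m)
     = (\<Sum>a\<in>Poly_Mapping.keys P. Poly_Mapping.lookup P a * (if a = \<alpha>0 then Poly_Mapping.lookup ?Q ?m else 0))"
    unfolding lookup_times_fin by (intro sum.cong refl) (simp add: inner)
  also have "\<dots> = Poly_Mapping.lookup P \<alpha>0 * Poly_Mapping.lookup ?Q ?m"
    using a0 by (simp add: if_distrib cong: if_cong)
  finally have "Poly_Mapping.lookup (P * ?Q) (\<alpha>0 + ?m) = Poly_Mapping.lookup P \<alpha>0 ^ Suc s"
    using Suc.IH by simp
  moreover have "(\<Sum>j<Suc s. \<alpha>0) = \<alpha>0 + ?m" by (simp add: add.commute)
  ultimately show ?case using k by simp
qed



lemma digits_inj:
  fixes x y :: "nat \<Rightarrow> nat"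
  assumes "\<forall>t<n. x t < B" "\<forall>t<n. y t < B" "(\<Sum>t<n. B^t * x t) = (\<Sum>t<n. B^t * y t)"
  shows "\<forall>t<n. x t = y t"
  using assms
proof (induction n arbitrary: x y)
  case 0 then show ?case by simp
next
  case (Suc n)
  have ex: "(\<Sum>t<Suc n. B^t * z t) = z 0 + B * (\<Sum>t<n. B^t * z (Suc t))" for z :: "nat \<Rightarrow> nat"
    by (simp only: sum.lessThan_Suc_shift sum_distrib_left) (simp add: ac_simps)
  let ?X = "(\<Sum>t<n. B^t * x (Suc t))" and ?Y = "(\<Sum>t<n. B^t * y (Suc t))"
  have e: "x 0 + B * ?X = y 0 + B * ?Y" using Suc.prems(3) ex[of x] ex[of y] by simp
  have x0: "x 0 < B" "y 0 < B" using Suc.prems by auto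
  have "(x 0 + B * ?X) mod B = x 0" "(y 0 + B * ?Y) mod B = y 0" using x0 by simp_all
  then have h0: "x 0 = y 0" using e by metis
  have B0: "B > 0" using x0 by simp
  have "(x 0 + B * ?X) div B = ?X" "(y 0 + B * ?Y) div B = ?Y" using x0 B0 by simp_all
  then have "?X = ?Y" using e by metis
  then have hS: "\<forall>t<n. x (Suc t) = y (Suc t)"
    by (intro Suc.IH[of "\<lambda>t. x (Suc t)" "\<lambda>t. y (Suc t)"]) (use Suc.prems in auto)
  show ?case
  proof (intro allI impI)
    fix t assume "t < Suc n"
    then show "x t = y t" using h0 hS by (cases t) auto
  qed
qed

lemma exists_weight:
  fixes P :: "(('d::finite) \<Rightarrow>\<^sub>0 nat) \<Rightarrow>\<^sub>0 complex"
  assumes nz: "\<exists>\<beta>\<in>Poly_Mapping.keys P. \<beta> \<noteq> 0"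
  shows "\<exists>(\<phi>::(('d \<Rightarrow>\<^sub>0 nat) \<Rightarrow> nat)) \<alpha>0. (\<forall>x y. \<phi> (x+y) = \<phi> x + \<phi> y) \<and> \<alpha>0 \<in> Poly_Mapping.keys P \<and>
     (\<forall>\<beta>\<in>Poly_Mapping.keys P. \<phi> \<beta> \<le> \<phi> \<alpha>0) \<and>
     (\<forall>\<beta>\<in>Poly_Mapping.keys P. \<phi> \<beta> = \<phi> \<alpha>0 \<longrightarrow> \<beta> = \<alpha>0) \<and> \<alpha>0 \<noteq> 0"
proof -
  define n where "n = card (UNIV :: 'd set)"
  obtain h where hb: "bij_betw h {0..<n} (UNIV :: 'd set)"
    using ex_bij_betw_nat_finite[of "UNIV :: 'd set"] unfolding n_def by auto
  have hs: "\<exists>t<n. h t = i" for i using hb unfolding bij_betw_def by (metis UNIV_I lessThan_atLeast0 lessThan_iff imageE)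
  define B where "B = Suc (\<Sum>\<alpha>\<in>Poly_Mapping.keys P. \<Sum>t<n. Poly_Mapping.lookup \<alpha> (h t))"
  define \<phi> where "\<phi> \<alpha> = (\<Sum>t<n. B^t * Poly_Mapping.lookup \<alpha> (h t))" for \<alpha> :: "'d \<Rightarrow>\<^sub>0 nat"
  have add: "\<phi> (x+y) = \<phi> x + \<phi> y" for x y
    by (simp add: \<phi>_def lookup_add distrib_left sum.distrib)
  have dig: "Poly_Mapping.lookup \<alpha> (h t) < B" if "\<alpha> \<in> Poly_Mapping.keys P" "t < n" for \<alpha> t
  proof -
    have "Poly_Mapping.lookup \<alpha> (h t) \<le> (\<Sum>t<n. Poly_Mapping.lookup \<alpha> (h t))"
      using that by (intro member_le_sum) auto
    also have "\<dots> \<le> (\<Sum>\<alpha>\<in>Poly_Mapping.keys P. \<Sum>t<n. Poly_Mapping.lookup \<alpha> (h t))"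
      using that by (intro member_le_sum) auto
    finally show ?thesis unfolding B_def by simp
  qed
  have inj: "\<alpha> = \<beta>" if "\<alpha> \<in> Poly_Mapping.keys P" "\<beta> \<in> Poly_Mapping.keys P" "\<phi> \<alpha> = \<phi> \<beta>" for \<alpha> \<beta>
  proof -
    have "\<forall>t<n. Poly_Mapping.lookup \<alpha> (h t) = Poly_Mapping.lookup \<beta> (h t)"
      using digits_inj[of n "\<lambda>t. Poly_Mapping.lookup \<alpha> (h t)" B "\<lambda>t. Poly_Mapping.lookup \<beta> (h t)"]
        that dig unfolding \<phi>_def by blast
    then have "Poly_Mapping.lookup \<alpha> i = Poly_Mapping.lookup \<beta> i" for i using hs[of i] by blast
    then show ?thesis by (intro poly_mapping_eqI) simp
  qed
  have pos: "\<phi> \<beta> > 0" if "\<beta> \<noteq> 0" for \<beta>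
  proof -
    have "\<exists>i. Poly_Mapping.lookup \<beta> i \<noteq> 0"
    proof (rule ccontr)
      assume "\<not> (\<exists>i. Poly_Mapping.lookup \<beta> i \<noteq> 0)"
      then have "\<beta> = 0" by (intro poly_mapping_eqI) simp
      with that show False by simp
    qed
    then obtain i where "Poly_Mapping.lookup \<beta> i \<noteq> 0" by blast
    moreover obtain t where t: "t < n" "h t = i" using hs by blast
    ultimately have "0 < B^t * Poly_Mapping.lookup \<beta> (h t)" unfolding B_def by simp
    also have "\<dots> \<le> \<phi> \<beta>" unfolding \<phi>_def using t by (intro member_le_sum) auto
    finally show ?thesis .
  qed
  have fin: "finite (Poly_Mapping.keys P)" by simp
  obtain \<beta>1 where b1: "\<beta>1 \<in> Poly_Mapping.keys P" "\<beta>1 \<noteq> 0" using nz by blast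
  define M where "M = Max (\<phi> ` Poly_Mapping.keys P)"
  have "M \<in> \<phi> ` Poly_Mapping.keys P" unfolding M_def using fin b1 by (intro Max_in) auto
  then obtain \<alpha>0 where a0: "\<alpha>0 \<in> Poly_Mapping.keys P" "\<phi> \<alpha>0 = M" by blast
  have le: "\<phi> \<beta> \<le> \<phi> \<alpha>0" if "\<beta> \<in> Poly_Mapping.keys P" for \<beta>
    unfolding a0 M_def using fin that by (intro Max_ge) auto
  have "\<phi> 0 = 0" unfolding \<phi>_def by simp
  moreover have "\<phi> \<alpha>0 > 0" using le[OF b1(1)] pos[OF b1(2)] by linarith
  ultimately have "\<alpha>0 \<noteq> 0" by auto
  moreover have "\<forall>\<beta>\<in>Poly_Mapping.keys P. \<phi> \<beta> = \<phi> \<alpha>0 \<longrightarrow> \<beta> = \<alpha>0" using inj a0(1) by blast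
  ultimately have "(\<forall>x y. \<phi> (x+y) = \<phi> x + \<phi> y) \<and> \<alpha>0 \<in> Poly_Mapping.keys P \<and>
     (\<forall>\<beta>\<in>Poly_Mapping.keys P. \<phi> \<beta> \<le> \<phi> \<alpha>0) \<and>
     (\<forall>\<beta>\<in>Poly_Mapping.keys P. \<phi> \<beta> = \<phi> \<alpha>0 \<longrightarrow> \<beta> = \<alpha>0) \<and> \<alpha>0 \<noteq> 0"
    using add a0(1) le by blast
  then show ?thesis by blast
qed

lemma norm_ge:
  fixes Q :: "'d cpoly"
  assumes "\<gamma> \<in> Poly_Mapping.keys Q"
  shows "sqrt (real (mi_fact \<gamma>)) * cmod (Poly_Mapping.lookup Q \<gamma>) \<le> apolar_norm Q"
proof -
  have t: "Re (of_nat m * z * cnj z) = real m * (cmod z)^2" for m and z :: complex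
    by (simp add: mult.assoc flip: complex_norm_square)
  have "Re (apolar_inner Q Q) = (\<Sum>\<alpha>\<in>Poly_Mapping.keys Q. real (mi_fact \<alpha>) * (cmod (Poly_Mapping.lookup Q \<alpha>))^2)"
    unfolding apolar_inner_def by (simp only: Un_absorb Re_sum t)
  also have "\<dots> \<ge> real (mi_fact \<gamma>) * (cmod (Poly_Mapping.lookup Q \<gamma>))^2"
    using assms by (intro member_le_sum) auto
  finally have "sqrt (real (mi_fact \<gamma>) * (cmod (Poly_Mapping.lookup Q \<gamma>))^2) \<le> apolar_norm Q"
    unfolding apolar_norm_def by simp
  then show ?thesis by (simp add: real_sqrt_mult)
qed

lemma mi_fact_ge:
  assumes "Poly_Mapping.lookup \<alpha>0 i \<noteq> 0" "s \<ge> 1"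
  shows "fact s \<le> mi_fact (\<Sum>j<s. \<alpha>0)"
proof -
  let ?g = "(\<Sum>j<s. \<alpha>0)"
  have l: "Poly_Mapping.lookup ?g i = s * Poly_Mapping.lookup \<alpha>0 i" by (simp add: lookup_sum)
  then have i: "i \<in> Poly_Mapping.keys ?g" using assms by (simp add: in_keys_iff)
  have "fact s \<le> (fact (Poly_Mapping.lookup ?g i) :: nat)" using l assms by (intro fact_mono) simp
  also have "\<dots> \<le> fact (Poly_Mapping.lookup ?g i) * (\<Prod>j\<in>Poly_Mapping.keys ?g - {i}. fact (Poly_Mapping.lookup ?g j))"
    using prod_ge_1[of "Poly_Mapping.keys ?g - {i}" "\<lambda>j. fact (Poly_Mapping.lookup ?g j) :: nat"]
    by (simp add: fact_ge_1)
  also have "\<dots> = mi_fact ?g" unfolding mi_fact_def using i by (simp add: prod.remove)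
  finally show ?thesis .
qed



theorem theorem5p2:
  fixes P :: "('d::finite) cpoly"
  assumes "total_degree P \<ge> 1"
  shows "filterlim (\<lambda>s::nat. root s (apolar_norm (P ^ s))) at_top sequentially"
proof -
  have fin: "finite (Poly_Mapping.keys P)" by simp
  have "\<exists>\<beta>\<in>Poly_Mapping.keys P. \<beta> \<noteq> 0"
  proof (rule ccontr)
    assume "\<not> (\<exists>\<beta>\<in>Poly_Mapping.keys P. \<beta> \<noteq> 0)"
    then have "mi_abs ` Poly_Mapping.keys P \<subseteq> {0}" by (auto simp: mi_abs_def)
    then have h: "insert 0 (mi_abs ` Poly_Mapping.keys P) = {0}" by blast
    have "total_degree P = 0" unfolding total_degree_def h by simp
    then show False using assms by simp
  qed
  then obtain \<phi> :: "('d \<Rightarrow>\<^sub>0 nat) \<Rightarrow> nat" and \<alpha>0 where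
    add: "\<And>x y. \<phi> (x+y) = \<phi> x + \<phi> y" and a0: "\<alpha>0 \<in> Poly_Mapping.keys P"
    and le: "\<And>\<beta>. \<beta>\<in>Poly_Mapping.keys P \<Longrightarrow> \<phi> \<beta> \<le> \<phi> \<alpha>0"
    and uniq: "\<And>\<beta>. \<beta>\<in>Poly_Mapping.keys P \<Longrightarrow> \<phi> \<beta> = \<phi> \<alpha>0 \<Longrightarrow> \<beta> = \<alpha>0"
    and nz: "\<alpha>0 \<noteq> 0"
    using exists_weight[of P] by blast
  define c where "c = Poly_Mapping.lookup P \<alpha>0"
  have c0: "c \<noteq> 0" using a0 unfolding c_def by (simp add: in_keys_iff)
  have "\<exists>i. Poly_Mapping.lookup \<alpha>0 i \<noteq> 0"
  proof (rule ccontr)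
    assume "\<not> (\<exists>i. Poly_Mapping.lookup \<alpha>0 i \<noteq> 0)"
    then have "\<alpha>0 = 0" by (intro poly_mapping_eqI) simp
    with nz show False by simp
  qed
  then obtain i where i: "Poly_Mapping.lookup \<alpha>0 i \<noteq> 0" by blast
  have bound: "sqrt (fact s) * cmod c ^ s \<le> apolar_norm (P ^ s)" if s: "s \<ge> 1" for s
  proof -
    let ?g = "(\<Sum>j<s. \<alpha>0)"
    have lk: "Poly_Mapping.lookup (P^s) ?g = c ^ s"
      unfolding c_def by (rule conjunct2[OF power_lead[of \<phi> \<alpha>0 P s, OF add a0 le uniq]])
    then have gk: "?g \<in> Poly_Mapping.keys (P^s)" using c0 by (simp add: in_keys_iff)
    have f0: "fact s \<le> mi_fact ?g" by (rule mi_fact_ge[OF i s])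
    have f1: "real (fact s) \<le> real (mi_fact ?g)" using f0 by (simp only: of_nat_le_iff)
    have f: "(fact s :: real) \<le> real (mi_fact ?g)" using f1 by (simp only: of_nat_fact)
    have "sqrt (fact s) \<le> sqrt (real (mi_fact ?g))" using real_sqrt_le_mono[OF f] .
    then have "sqrt (fact s) * cmod c ^ s \<le> sqrt (real (mi_fact ?g)) * cmod (Poly_Mapping.lookup (P^s) ?g)"
      by (simp add: lk norm_power mult_right_mono)
    also have "\<dots> \<le> apolar_norm (P^s)" by (rule norm_ge[OF gk])
    finally show ?thesis .
  qed
  show ?thesis
    unfolding filterlim_at_top
  proof
    fix Z :: real
    define C where "C = max Z 1"
    define A where "A = (C / cmod c)^2"
    have "(\<lambda>n. inverse (fact n) * A ^ n) \<longlonglongrightarrow> 0"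
      by (rule summable_LIMSEQ_zero[OF summable_exp])
    then have ev1: "eventually (\<lambda>n. inverse (fact n) * A ^ n < 1) sequentially"
      by (rule order_tendstoD) simp
    show "eventually (\<lambda>s. Z \<le> root s (apolar_norm (P ^ s))) sequentially"
      using ev1 eventually_ge_at_top[of 1]
    proof eventually_elim
      case (elim s)
      have C1: "C \<ge> 1" unfolding C_def by simp
      have cp: "cmod c > 0" using c0 by simp
      have "A ^ s \<le> fact s" using elim(1) by (simp add: field_simps)
      then have "sqrt (A ^ s) \<le> sqrt (fact s)" by simp
      moreover have "sqrt (A ^ s) = (C / cmod c) ^ s"
        unfolding A_def using C1 cp by (simp add: real_sqrt_power)
      ultimately have "(C / cmod c) ^ s * cmod c ^ s \<le> apolar_norm (P ^ s)"
        using bound[OF elim(2)] by (metis mult_right_mono norm_ge_zero order_trans zero_le_power)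
      then have "C ^ s \<le> apolar_norm (P ^ s)" using cp by (simp add: power_divide)
      then have "root s (C ^ s) \<le> root s (apolar_norm (P ^ s))"
        using elim(2) by (simp add: real_root_le_iff)
      moreover have "root s (C ^ s) = C" using elim(2) C1 by (simp add: real_root_power_cancel)
      ultimately show ?case unfolding C_def by linarith
    qed
  qed
qed

end
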